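(* Let $(X,\varphi)$ be an irreducible Smale space and $\mathcal R_1$ a Markov partition with $\max_{R\in\mathcal R_1}\operatorname{diam}R\le\varepsilon_X''$, generating $(\mathcal R_n)_{n\ge0}$. Then for every $n\in\mathbb N$, $$\mathcal R_{n+1}=\{R\in\varphi(\mathcal R_n)\vee\mathcal R_n\vee\varphi^{-1}(\mathcal R_n):\operatorname{int}(R)\ne\varnothing\}.$$
   Context: A Smale space $(X,\varphi)$: compact metric space $(X,d)$, homeomorphism $\varphi$, constants $\varepsilon_X>0,\lambda_X>1$ and a continuous bracket $[\cdot,\cdot]$ on $\{(x,y):d(x,y)\le\varepsilon_X\}$ with $[x,x]=x$, $[x,[y,z]]=[x,z]$, $[[x,y],z]=[x,z]$, $\varphi([x,y])=[\varphi(x),\varphi(y)]$ (whenever defined), such that $\varphi$ contracts distances by $\lambda_X^{-1}$ on local stable sets $X^s(x,\varepsilon)=\{y:d(x,y)<\varepsilon,[x,y]=y\}$ and $\varphi^{-1}$ contracts by $\lambda_X^{-1}$ on local unstable sets $X^u(x,\varepsilon)=\{y:d(x,y)<\varepsilon,[y,x]=y\}$. Irreducible: for nonempty open $U,V$ some $n\in\mathbb N$ has $\varphi^n(U)\cap V\ne\varnothing$. Fix $\varepsilon_X'\in(0,\varepsilon_X/2]$ with $d(x,y)\le\varepsilon_X'\Rightarrow d(x,[x,y]),d(y,[x,y])<\varepsilon_X/2$, and $\varepsilon_X''\in(0,\varepsilon_X'/12)$ with $d(x,y)\le\varepsilon_X''\Rightarrow d(\varphi^i x,\varphi^i y)\le\varepsilon_X'/2$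 ($|i|\le2$) and $d([x,y],x),d([x,y],y)\le\varepsilon_X'/4$. Rectangle: nonempty $R$, $\operatorname{diam}R\le\varepsilon_X'$, $[x,y]\in R$ for $x,y\in R$; $X^{s/u}(x,R)=X^{s/u}(x,2\varepsilon_X')\cap R$; proper: closed with $R=\operatorname{cl}\operatorname{int}R$. Markov partition: finite cover by nonempty proper rectangles with disjoint interiors such that $\varphi(X^u(x,R_i))\supset X^u(\varphi x,R_j)$ and $\varphi(X^s(x,R_i))\subset X^s(\varphi x,R_j)$ whenever $x\in\operatorname{int}R_i\cap\varphi^{-1}(\operatorname{int}R_j)$. $\mathcal U\vee\mathcal W=\{U\cap W:U\in\mathcal U,W\in\mathcal W\}$, $\varphi(\mathcal U)=\{\varphi(U):U\in\mathcal U\}$. The generated sequence: $\mathcal R_0=\{X\}$, $\mathcal R_n=\{R\in\bigvee_{i=1-n}^{n-1}\varphi^{-i}(\mathcal R_1):\operatorname{int}R\ne\varnothing\}$. *)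

theory Defs
  imports "HOL-Analysis.Analysis"
begin

text \<open>The Smale space is the whole (compact) type 'a; the bracket is a total
function of which only the values on pairs at distance at most epsX matter.\<close>

definition local_stable :: "('a::metric_space \<Rightarrow> 'a \<Rightarrow> 'a) \<Rightarrow> 'a \<Rightarrow> real \<Rightarrow> 'a set" where
  "local_stable br x e = {y. dist x y < e \<and> br x y = y}"

definition local_unstable :: "('a::metric_space \<Rightarrow> 'a \<Rightarrow> 'a) \<Rightarrow> 'a \<Rightarrow> real \<Rightarrow> 'a set" where
  "local_unstable br x e = {y. dist x y < e \<and> br y x = y}"

definition smale_space ::
  "('a::metric_space \<Rightarrow> 'a) \<Rightarrow> ('a \<Rightarrow> 'a \<Rightarrow> 'a) \<Rightarrow> real \<Rightarrow> real \<Rightarrow> bool" where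
  "smale_space phi br epsX lamX \<longleftrightarrow>
     compact (UNIV :: 'a set) \<and>
     bij phi \<and> continuous_on UNIV phi \<and> continuous_on UNIV (inv phi) \<and>
     epsX > 0 \<and> lamX > 1 \<and>
     continuous_on {p. dist (fst p) (snd p) \<le> epsX} (\<lambda>p. br (fst p) (snd p)) \<and>
     (\<forall>x. br x x = x) \<and>
     (\<forall>x y z. dist y z \<le> epsX \<and> dist x (br y z) \<le> epsX \<and> dist x z \<le> epsX
        \<longrightarrow> br x (br y z) = br x z) \<and>
     (\<forall>x y z. dist x y \<le> epsX \<and> dist (br x y) z \<le> epsX \<and> dist x z \<le> epsX
        \<longrightarrow> br (br x y) z = br x z) \<and>
     (\<forall>x y. dist x y \<le> epsX \<and> dist (phi x) (phi y) \<le> epsX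
        \<longrightarrow> phi (br x y) = br (phi x) (phi y)) \<and>
     (\<forall>x y z. y \<in> local_stable br x epsX \<and> z \<in> local_stable br x epsX
        \<longrightarrow> dist (phi y) (phi z) \<le> dist y z / lamX) \<and>
     (\<forall>x y z. y \<in> local_unstable br x epsX \<and> z \<in> local_unstable br x epsX
        \<longrightarrow> dist (inv phi y) (inv phi z) \<le> dist y z / lamX)"

text \<open>Irreducibility; \<nat> is taken to be {1,2,...}.\<close>
definition irreducible_dyn :: "('a::topological_space \<Rightarrow> 'a) \<Rightarrow> bool" where
  "irreducible_dyn phi \<longleftrightarrow>
     (\<forall>U V. open U \<and> open V \<and> U \<noteq> {} \<and> V \<noteq> {} \<longrightarrow>
        (\<exists>n::nat. n \<ge> 1 \<and> (phi ^^ n) ` U \<inter> V \<noteq> {}))"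

text \<open>The constants epsX' and epsX'' fixed in the paper.\<close>
definition eps1_ok :: "('a::metric_space \<Rightarrow> 'a \<Rightarrow> 'a) \<Rightarrow> real \<Rightarrow> real \<Rightarrow> bool" where
  "eps1_ok br epsX e1 \<longleftrightarrow> 0 < e1 \<and> e1 \<le> epsX / 2 \<and>
     (\<forall>x y. dist x y \<le> e1 \<longrightarrow> dist x (br x y) < epsX / 2 \<and> dist y (br x y) < epsX / 2)"

definition zpow :: "('a \<Rightarrow> 'a) \<Rightarrow> int \<Rightarrow> 'a \<Rightarrow> 'a" where
  "zpow phi i = (if i \<ge> 0 then phi ^^ nat i else inv phi ^^ nat (- i))"

definition eps2_ok :: "('a::metric_space \<Rightarrow> 'a) \<Rightarrow> ('a \<Rightarrow> 'a \<Rightarrow> 'a) \<Rightarrow> real \<Rightarrow> real \<Rightarrow> bool" where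
  "eps2_ok phi br e1 e2 \<longleftrightarrow> 0 < e2 \<and> e2 < e1 / 12 \<and>
     (\<forall>x y. dist x y \<le> e2 \<longrightarrow>
        (\<forall>i::int. \<bar>i\<bar> \<le> 2 \<longrightarrow> dist (zpow phi i x) (zpow phi i y) \<le> e1 / 2) \<and>
        dist (br x y) x \<le> e1 / 4 \<and> dist (br x y) y \<le> e1 / 4)"

definition rectangle :: "('a::metric_space \<Rightarrow> 'a \<Rightarrow> 'a) \<Rightarrow> real \<Rightarrow> 'a set \<Rightarrow> bool" where
  "rectangle br e1 R \<longleftrightarrow> R \<noteq> {} \<and> diameter R \<le> e1 \<and> (\<forall>x\<in>R. \<forall>y\<in>R. br x y \<in> R)"

definition stable_in :: "('a::metric_space \<Rightarrow> 'a \<Rightarrow> 'a) \<Rightarrow> real \<Rightarrow> 'a \<Rightarrow> 'a set \<Rightarrow> 'a set" where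
  "stable_in br e1 x R = local_stable br x (2 * e1) \<inter> R"

definition unstable_in :: "('a::metric_space \<Rightarrow> 'a \<Rightarrow> 'a) \<Rightarrow> real \<Rightarrow> 'a \<Rightarrow> 'a set \<Rightarrow> 'a set" where
  "unstable_in br e1 x R = local_unstable br x (2 * e1) \<inter> R"

definition proper_rect :: "('a::metric_space \<Rightarrow> 'a \<Rightarrow> 'a) \<Rightarrow> real \<Rightarrow> 'a set \<Rightarrow> bool" where
  "proper_rect br e1 R \<longleftrightarrow> rectangle br e1 R \<and> closed R \<and> R = closure (interior R)"

definition markov_partition ::
  "('a::metric_space \<Rightarrow> 'a) \<Rightarrow> ('a \<Rightarrow> 'a \<Rightarrow> 'a) \<Rightarrow> real \<Rightarrow> 'a set set \<Rightarrow> bool" where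
  "markov_partition phi br e1 P \<longleftrightarrow>
     finite P \<and> \<Union>P = UNIV \<and> (\<forall>R\<in>P. proper_rect br e1 R) \<and>
     (\<forall>R\<in>P. \<forall>S\<in>P. R \<noteq> S \<longrightarrow> interior R \<inter> interior S = {}) \<and>
     (\<forall>Ri\<in>P. \<forall>Rj\<in>P. \<forall>x. x \<in> interior Ri \<and> phi x \<in> interior Rj \<longrightarrow>
        phi ` unstable_in br e1 x Ri \<supseteq> unstable_in br e1 (phi x) Rj \<and>
        phi ` stable_in br e1 x Ri \<subseteq> stable_in br e1 (phi x) Rj)"

definition cover_join :: "'a set set \<Rightarrow> 'a set set \<Rightarrow> 'a set set" where
  "cover_join U W = {A \<inter> B | A B. A \<in> U \<and> B \<in> W}"

definition cover_image :: "('a \<Rightarrow> 'b) \<Rightarrow> 'a set set \<Rightarrow> 'b set set" where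
  "cover_image f U = (\<lambda>A. f ` A) ` U"

definition big_join :: "int set \<Rightarrow> (int \<Rightarrow> 'a set set) \<Rightarrow> 'a set set" where
  "big_join I C = {(\<Inter>i\<in>I. f i) | f. \<forall>i\<in>I. f i \<in> C i}"

definition generated :: "('a::topological_space \<Rightarrow> 'a) \<Rightarrow> 'a set set \<Rightarrow> nat \<Rightarrow> 'a set set" where
  "generated phi R1 n = (if n = 0 then {UNIV} else
     {R \<in> big_join {1 - int n .. int n - 1} (\<lambda>i. cover_image (zpow phi (- i)) R1).
        interior R \<noteq> {}})"

end

theory Submission
  imports Defs
begin

lemma zpow_succ:
  assumes "bij phi" shows "zpow phi (i+1) x = phi (zpow phi i x)"
proof (cases "i \<ge> 0")
  case True
  then have "nat (i+1) = Suc (nat i)" by simp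
  then show ?thesis using True by (simp add: zpow_def)
next
  case False
  define m where "m = nat (-(i+1))"
  have a: "zpow phi (i+1) x = (inv phi ^^ m) x"
    using False by (cases "i+1 = 0") (auto simp: zpow_def m_def)
  have "nat (-i) = Suc m" using False by (simp add: m_def)
  then have b: "zpow phi i x = inv phi ((inv phi ^^ m) x)"
    using False by (simp add: zpow_def)
  show ?thesis using a b assms by (simp add: bij_is_surj surj_f_inv_f)
qed

lemma zpow_pred:
  assumes "bij phi" shows "zpow phi (i-1) x = inv phi (zpow phi i x)"
proof -
  have "zpow phi i x = phi (zpow phi (i-1) x)" using zpow_succ[OF assms, of "i-1"] by simp
  then show ?thesis using assms by (simp add: bij_is_inj)
qed

lemma zpow_0: "zpow phi 0 x = x" by (simp add: zpow_def)

lemma zpow_add: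
  assumes "bij phi" shows "zpow phi (a+b) x = zpow phi a (zpow phi b x)"
proof (induct a rule: int_induct[where k=0])
  case base then show ?case by (simp add: zpow_0)
next
  case (step1 i)
  have "zpow phi (i+1+b) x = zpow phi ((i+b)+1) x" by (simp add: ac_simps)
  also have "\<dots> = phi (zpow phi (i+b) x)" by (rule zpow_succ[OF assms])
  finally show ?case using step1 zpow_succ[OF assms] by simp
next
  case (step2 i)
  have "zpow phi (i-1+b) x = zpow phi ((i+b)-1) x" by (simp add: algebra_simps)
  also have "\<dots> = inv phi (zpow phi (i+b) x)" by (rule zpow_pred[OF assms])
  finally show ?case using step2 zpow_pred[OF assms] by simp
qed

lemma zpow_cont:
  assumes "bij phi" "continuous_on UNIV phi" "continuous_on UNIV (inv phi)"
  shows "continuous_on UNIV (zpow phi i)"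
proof (induct i rule: int_induct[where k=0])
  case base
  have "zpow phi 0 = id" by (rule ext) (simp add: zpow_0)
  then show ?case by simp
next
  case (step1 i)
  have "zpow phi (i+1) = phi \<circ> zpow phi i" by (rule ext) (simp add: zpow_succ[OF assms(1)])
  then show ?case using step1 assms(2)
    by (metis continuous_on_compose continuous_on_subset top_greatest)
next
  case (step2 i)
  have "zpow phi (i-1) = inv phi \<circ> zpow phi i" by (rule ext) (simp add: zpow_pred[OF assms(1)])
  then show ?case using step2 assms(3)
    by (metis continuous_on_compose continuous_on_subset top_greatest)
qed

lemma zpow_inv: assumes "bij phi" shows "zpow phi (-k) (zpow phi k x) = x"
  using zpow_add[OF assms, of "-k" k x] by (simp add: zpow_0)

lemma mem_zimage: assumes "bij phi"
  shows "y \<in> zpow phi k ` S \<longleftrightarrow> zpow phi (-k) y \<in> S"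
proof
  assume "y \<in> zpow phi k ` S"
  then show "zpow phi (-k) y \<in> S" using zpow_inv[OF assms] by auto
next
  assume "zpow phi (-k) y \<in> S"
  moreover have "y = zpow phi k (zpow phi (-k) y)" using zpow_inv[OF assms, of "-k"] by simp
  ultimately show "y \<in> zpow phi k ` S" by blast
qed

lemma interior_zimage:
  assumes "bij phi" "continuous_on UNIV phi" "continuous_on UNIV (inv phi)"
  shows "interior (zpow phi k ` S) = zpow phi k ` interior S"
proof -
  define f where "f = zpow phi k"
  define g where "g = zpow phi (-k)"
  have cf: "continuous_on UNIV f" and cg: "continuous_on UNIV g"
    using zpow_cont[OF assms] by (auto simp: f_def g_def)
  have im: "\<And>T. f ` T = g -` T" using mem_zimage[OF assms(1)] zpow_inv[OF assms(1)] by (auto simp: f_def g_def)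
  have fg: "\<And>y. f (g y) = y" using zpow_inv[OF assms(1), of "-k"] by (simp add: f_def g_def)
  have gf: "\<And>y. g (f y) = y" using zpow_inv[OF assms(1), of "k"] by (simp add: f_def g_def)
  have "g -` interior S \<subseteq> interior (g -` S)"
    by (rule interior_maximal) (auto intro: open_vimage cg interior_subset[THEN subsetD])
  moreover
  have "f -` interior (g -` S) \<subseteq> interior S"
  proof (rule interior_maximal)
    show "f -` interior (g -` S) \<subseteq> S" using interior_subset[of "g -` S"] gf by auto
    show "open (f -` interior (g -` S))" by (rule open_vimage) (auto intro: cf)
  qed
  then have "interior (g -` S) \<subseteq> g -` interior S" using fg by (auto; metis subsetD vimageI)
  ultimately show ?thesis using im by (simp add: f_def) 
qed


lemma zpow_1: "zpow phi 1 = phi" by (rule ext) (simp add: zpow_def)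
lemma zpow_m1: "zpow phi (-1) = inv phi" by (rule ext) (simp add: zpow_def)

definition Jn :: "('a \<Rightarrow> 'a) \<Rightarrow> int set \<Rightarrow> (int \<Rightarrow> 'a set) \<Rightarrow> 'a set" where
  "Jn phi I g = (\<Inter>i\<in>I. zpow phi (-i) ` g i)"

lemma mem_Jn: assumes "bij phi"
  shows "y \<in> Jn phi I g \<longleftrightarrow> (\<forall>i\<in>I. zpow phi i y \<in> g i)"
  unfolding Jn_def using mem_zimage[OF assms] by simp

lemma mem_zimage_Jn: assumes "bij phi"
  shows "y \<in> zpow phi k ` Jn phi I g \<longleftrightarrow> (\<forall>i\<in>I. zpow phi (i-k) y \<in> g i)"
  by (simp add: mem_zimage[OF assms] mem_Jn[OF assms] zpow_add[OF assms, symmetric])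

lemma Jn_cong: "\<forall>i\<in>I. f i = f' i \<Longrightarrow> Jn phi I f = Jn phi I f'"
  unfolding Jn_def by simp

lemma gen_rep:
  assumes "m \<ge> 1"
  shows "X \<in> generated phi R1 m \<longleftrightarrow> interior X \<noteq> {} \<and>
    (\<exists>g. (\<forall>i\<in>{1 - int m .. int m - 1}. g i \<in> R1) \<and> X = Jn phi {1 - int m .. int m - 1} g)"
proof -
  let ?I = "{1 - int m .. int m - 1}"
  have "X \<in> big_join ?I (\<lambda>i. cover_image (zpow phi (- i)) R1) \<longleftrightarrow>
    (\<exists>g. (\<forall>i\<in>?I. g i \<in> R1) \<and> X = Jn phi ?I g)"
  proof
    assume "X \<in> big_join ?I (\<lambda>i. cover_image (zpow phi (- i)) R1)"
    then obtain f where f: "\<forall>i\<in>?I. f i \<in> (\<lambda>A. zpow phi (-i) ` A) ` R1" "X = (\<Inter>i\<in>?I. f i)"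
      unfolding big_join_def cover_image_def by blast
    then have "\<forall>i\<in>?I. \<exists>S. S \<in> R1 \<and> f i = zpow phi (-i) ` S" by blast
    then obtain g where g: "\<forall>i\<in>?I. g i \<in> R1 \<and> f i = zpow phi (-i) ` g i" by metis
    then have "X = Jn phi ?I g" using f(2) unfolding Jn_def by simp
    then show "\<exists>g. (\<forall>i\<in>?I. g i \<in> R1) \<and> X = Jn phi ?I g" using g by blast
  next
    assume "\<exists>g. (\<forall>i\<in>?I. g i \<in> R1) \<and> X = Jn phi ?I g"
    then obtain g where g: "\<forall>i\<in>?I. g i \<in> R1" "X = Jn phi ?I g" by blast
    show "X \<in> big_join ?I (\<lambda>i. cover_image (zpow phi (- i)) R1)"
      unfolding big_join_def cover_image_def Jn_def g(2)
      by (rule CollectI, rule exI[of _ "\<lambda>i. zpow phi (-i) ` g i"]) (use g(1) in auto)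
  qed
  then show ?thesis using assms unfolding generated_def by auto
qed

lemma agree:
  assumes "bij phi" "continuous_on UNIV phi" "continuous_on UNIV (inv phi)"
    and disj: "\<forall>R\<in>R1. \<forall>S\<in>R1. R \<noteq> S \<longrightarrow> interior R \<inter> interior S = {}"
    and "\<forall>y\<in>X. zpow phi j y \<in> S" "\<forall>y\<in>X. zpow phi j y \<in> S'"
    and "S \<in> R1" "S' \<in> R1" "interior X \<noteq> {}"
  shows "S = S'"
proof (rule ccontr)
  assume ne: "S \<noteq> S'"
  have "X \<subseteq> zpow phi (-j) ` (S \<inter> S')" using assms(5,6) mem_zimage[OF assms(1)] by auto
  then have "interior X \<subseteq> interior (zpow phi (-j) ` (S \<inter> S'))" by (rule interior_mono)
  also have "\<dots> = zpow phi (-j) ` (interior S \<inter> interior S')"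
    using interior_zimage[OF assms(1-3)] by simp
  also have "\<dots> = {}" using disj ne assms(7,8) by auto
  finally show False using assms(9) by blast
qed

lemma idx_split:
  assumes "(n::nat) \<ge> 1"
  shows "(\<forall>j\<in>{- int n .. int n}. P j) \<longleftrightarrow>
    (\<forall>i\<in>{1 - int n .. int n - 1}. P (i - 1)) \<and> (\<forall>i\<in>{1 - int n .. int n - 1}. P i) \<and>
    (\<forall>i\<in>{1 - int n .. int n - 1}. P (i + 1))"
proof
  assume "\<forall>j\<in>{- int n .. int n}. P j"
  then show "(\<forall>i\<in>{1 - int n .. int n - 1}. P (i - 1)) \<and> (\<forall>i\<in>{1 - int n .. int n - 1}. P i) \<and>
    (\<forall>i\<in>{1 - int n .. int n - 1}. P (i + 1))" by auto
next
  assume h: "(\<forall>i\<in>{1 - int n .. int n - 1}. P (i - 1)) \<and> (\<forall>i\<in>{1 - int n .. int n - 1}. P i) \<and>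
    (\<forall>i\<in>{1 - int n .. int n - 1}. P (i + 1))"
  show "\<forall>j\<in>{- int n .. int n}. P j"
  proof
    fix j assume j: "j \<in> {- int n .. int n}"
    show "P j"
    proof (cases "j = - int n")
      case True
      have "1 - int n \<in> {1 - int n .. int n - 1}" using assms by simp
      then have "P (1 - int n - 1)" using h by blast
      then show ?thesis using True by simp
    next
      case False
      show ?thesis
      proof (cases "j = int n")
        case True
        have "int n - 1 \<in> {1 - int n .. int n - 1}" using assms by simp
        then have "P (int n - 1 + 1)" using h by blast
        then show ?thesis using True by simp
      next
        case False
        then show ?thesis using h j \<open>j \<noteq> - int n\<close> by auto
      qed
    qed
  qed
qed

lemma Jn_split:
  assumes "bij phi" "(n::nat) \<ge> 1"
  shows "Jn phi {- int n .. int n} g =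
    phi ` Jn phi {1 - int n .. int n - 1} (\<lambda>i. g (i - 1)) \<inter> Jn phi {1 - int n .. int n - 1} g
    \<inter> inv phi ` Jn phi {1 - int n .. int n - 1} (\<lambda>i. g (i + 1))"
proof -
  have "Jn phi {- int n .. int n} g =
    zpow phi 1 ` Jn phi {1 - int n .. int n - 1} (\<lambda>i. g (i - 1)) \<inter> Jn phi {1 - int n .. int n - 1} g
    \<inter> zpow phi (-1) ` Jn phi {1 - int n .. int n - 1} (\<lambda>i. g (i + 1))"
  proof (rule set_eqI)
    fix y
    show "y \<in> Jn phi {- int n .. int n} g \<longleftrightarrow> y \<in> zpow phi 1 ` Jn phi {1 - int n .. int n - 1} (\<lambda>i. g (i - 1)) \<inter> Jn phi {1 - int n .. int n - 1} g
      \<inter> zpow phi (-1) ` Jn phi {1 - int n .. int n - 1} (\<lambda>i. g (i + 1))"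
      unfolding mem_zimage_Jn[OF assms(1)] mem_Jn[OF assms(1)] Int_iff
      using idx_split[OF assms(2), of "\<lambda>j. zpow phi j y \<in> g j"] by simp
  qed
  then show ?thesis by (simp only: zpow_1 zpow_m1)
qed


theorem lemma5p9:
  fixes phi :: "'a::metric_space \<Rightarrow> 'a" and br :: "'a \<Rightarrow> 'a \<Rightarrow> 'a"
    and epsX lamX e1 e2 :: real and R1 :: "'a set set" and n :: nat
  assumes "smale_space phi br epsX lamX"
    and "irreducible_dyn phi"
    and "eps1_ok br epsX e1"
    and "eps2_ok phi br e1 e2"
    and "markov_partition phi br e1 R1"
    and "\<forall>R\<in>R1. diameter R \<le> e2"
    and "n \<ge> 1"
  shows "generated phi R1 (n + 1) =
    {R \<in> cover_join (cover_join (cover_image phi (generated phi R1 n)) (generated phi R1 n))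
                     (cover_image (inv phi) (generated phi R1 n)).
       interior R \<noteq> {}}"
proof -
  have bij: "bij phi" and c1: "continuous_on UNIV phi" and c2: "continuous_on UNIV (inv phi)"
    using assms(1) unfolding smale_space_def by auto
  have disj: "\<forall>R\<in>R1. \<forall>S\<in>R1. R \<noteq> S \<longrightarrow> interior R \<inter> interior S = {}"
    using assms(5) unfolding markov_partition_def by auto
  have n1: "n \<ge> 1" by fact
  let ?I = "{1 - int n .. int n - 1}"
  let ?I1 = "{- int n .. int n}"
  have Gn: "\<And>X. X \<in> generated phi R1 n \<longleftrightarrow> interior X \<noteq> {} \<and>
    (\<exists>g. (\<forall>i\<in>?I. g i \<in> R1) \<and> X = Jn phi ?I g)"
    using gen_rep[OF n1] by blast
  have I1: "{1 - int (n+1) .. int (n+1) - 1} = ?I1" by simp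
  have Gn1: "\<And>X. X \<in> generated phi R1 (n+1) \<longleftrightarrow> interior X \<noteq> {} \<and>
    (\<exists>g. (\<forall>i\<in>?I1. g i \<in> R1) \<and> X = Jn phi ?I1 g)"
    using gen_rep[of "n+1"] unfolding I1 by simp
  have intphi: "\<And>S. interior (phi ` S) = phi ` interior S"
    using interior_zimage[OF bij c1 c2, of 1] by (simp add: zpow_1)
  have intinv: "\<And>S. interior (inv phi ` S) = inv phi ` interior S"
    using interior_zimage[OF bij c1 c2, of "-1"] by (simp add: zpow_m1)
  have RHS: "\<And>X. X \<in> cover_join (cover_join (cover_image phi (generated phi R1 n)) (generated phi R1 n))
                     (cover_image (inv phi) (generated phi R1 n)) \<longleftrightarrow>
     (\<exists>A B C. A \<in> generated phi R1 n \<and> B \<in> generated phi R1 n \<and> C \<in> generated phi R1 n \<and>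
        X = phi ` A \<inter> B \<inter> inv phi ` C)"
    unfolding cover_join_def cover_image_def by blast
  show ?thesis
  proof (rule set_eqI, rule iffI)
    fix X assume "X \<in> generated phi R1 (n + 1)"
    then obtain g where X: "interior X \<noteq> {}" "\<forall>i\<in>?I1. g i \<in> R1" "X = Jn phi ?I1 g"
      using Gn1 by blast
    define A where "A = Jn phi ?I (\<lambda>i. g (i - 1))"
    define B where "B = Jn phi ?I g"
    define C where "C = Jn phi ?I (\<lambda>i. g (i + 1))"
    have XE: "X = phi ` A \<inter> B \<inter> inv phi ` C"
      unfolding A_def B_def C_def X(3) by (rule Jn_split[OF bij n1])
    have "interior X \<subseteq> interior (phi ` A)" by (rule interior_mono) (auto simp: XE)
    then have iA: "interior A \<noteq> {}" using X(1) intphi by auto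
    have "interior X \<subseteq> interior B" by (rule interior_mono) (auto simp: XE)
    then have iB: "interior B \<noteq> {}" using X(1) by auto
    have "interior X \<subseteq> interior (inv phi ` C)" by (rule interior_mono) (auto simp: XE)
    then have iC: "interior C \<noteq> {}" using X(1) intinv by auto
    have "A \<in> generated phi R1 n" unfolding Gn
      using iA X(2) A_def by (intro conjI exI[of _ "\<lambda>i. g (i - 1)"]) auto
    moreover have "B \<in> generated phi R1 n" unfolding Gn
      using iB X(2) B_def by (intro conjI exI[of _ g]) auto
    moreover have "C \<in> generated phi R1 n" unfolding Gn
      using iC X(2) C_def by (intro conjI exI[of _ "\<lambda>i. g (i + 1)"]) auto
    ultimately show "X \<in> {R \<in> cover_join (cover_join (cover_image phi (generated phi R1 n)) (generated phi R1 n))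
                     (cover_image (inv phi) (generated phi R1 n)). interior R \<noteq> {}}"
    proof -
      assume a: "A \<in> generated phi R1 n" "B \<in> generated phi R1 n" "C \<in> generated phi R1 n"
      have "X \<in> cover_join (cover_join (cover_image phi (generated phi R1 n)) (generated phi R1 n))
                     (cover_image (inv phi) (generated phi R1 n))"
        unfolding RHS[of X] using a XE by blast
      then show ?thesis using X(1) by (rule CollectI[of "\<lambda>R. R \<in> _ \<and> interior R \<noteq> {}", OF conjI])
    qed
  next
    fix X assume "X \<in> {R \<in> cover_join (cover_join (cover_image phi (generated phi R1 n)) (generated phi R1 n))
                     (cover_image (inv phi) (generated phi R1 n)). interior R \<noteq> {}}"
    then have X1: "X \<in> cover_join (cover_join (cover_image phi (generated phi R1 n)) (generated phi R1 n))
                     (cover_image (inv phi) (generated phi R1 n))" and iX: "interior X \<noteq> {}" by auto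
    from X1[unfolded RHS[of X]] obtain A B C where ABC: "A \<in> generated phi R1 n" "B \<in> generated phi R1 n"
      "C \<in> generated phi R1 n" "X = phi ` A \<inter> B \<inter> inv phi ` C" by blast
    obtain gA where gA: "\<forall>i\<in>?I. gA i \<in> R1" "A = Jn phi ?I gA" using ABC(1) Gn by blast
    obtain gB where gB: "\<forall>i\<in>?I. gB i \<in> R1" "B = Jn phi ?I gB" using ABC(2) Gn by blast
    obtain gC where gC: "\<forall>i\<in>?I. gC i \<in> R1" "C = Jn phi ?I gC" using ABC(3) Gn by blast
    have mA: "\<forall>y\<in>X. \<forall>i\<in>?I. zpow phi (i - 1) y \<in> gA i"
    proof
      fix y assume "y \<in> X"
      then have "y \<in> zpow phi 1 ` Jn phi ?I gA" using ABC(4) gA(2) by (simp add: zpow_1)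
      then show "\<forall>i\<in>?I. zpow phi (i - 1) y \<in> gA i" by (simp only: mem_zimage_Jn[OF bij])
    qed
    have mB: "\<forall>y\<in>X. \<forall>i\<in>?I. zpow phi i y \<in> gB i"
    proof
      fix y assume "y \<in> X"
      then have "y \<in> Jn phi ?I gB" using ABC(4) gB(2) by simp
      then show "\<forall>i\<in>?I. zpow phi i y \<in> gB i" by (simp only: mem_Jn[OF bij])
    qed
    have mC: "\<forall>y\<in>X. \<forall>i\<in>?I. zpow phi (i + 1) y \<in> gC i"
    proof
      fix y assume "y \<in> X"
      then have "y \<in> zpow phi (-1) ` Jn phi ?I gC" using ABC(4) gC(2) by (simp add: zpow_m1)
      then have "\<forall>i\<in>?I. zpow phi (i - -1) y \<in> gC i" by (simp only: mem_zimage_Jn[OF bij])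
      then show "\<forall>i\<in>?I. zpow phi (i + 1) y \<in> gC i" by simp
    qed
    define g where "g i = (if i = - int n then gA (1 - int n) else if i = int n then gC (int n - 1) else gB i)" for i
    have aA: "\<forall>i\<in>?I. gA i = g (i - 1)"
    proof
      fix i assume i: "i \<in> ?I"
      show "gA i = g (i - 1)"
      proof (cases "i = 1 - int n")
        case True then show ?thesis by (simp add: g_def)
      next
        case False
        then have i1: "i - 1 \<in> ?I" "i - 1 \<noteq> - int n" "i - 1 \<noteq> int n" using i by auto
        have "gA i = gB (i - 1)"
          by (rule agree[OF bij c1 c2 disj _ _ _ _ iX, of "i - 1"]) (use mA mB i i1 gA gB in auto)
        then show ?thesis using i1 by (simp add: g_def)
      qed
    qed
    have aC: "\<forall>i\<in>?I. gC i = g (i + 1)"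
    proof
      fix i assume i: "i \<in> ?I"
      show "gC i = g (i + 1)"
      proof (cases "i = int n - 1")
        case True then show ?thesis using n1 by (simp add: g_def)
      next
        case False
        then have i1: "i + 1 \<in> ?I" "i + 1 \<noteq> - int n" "i + 1 \<noteq> int n" using i by auto
        have "gC i = gB (i + 1)"
          by (rule agree[OF bij c1 c2 disj _ _ _ _ iX, of "i + 1"]) (use mC mB i i1 gC gB in auto)
        then show ?thesis using i1 by (simp add: g_def)
      qed
    qed
    have aB: "\<forall>i\<in>?I. gB i = g i" by (auto simp: g_def)
    have gR: "\<forall>i\<in>?I1. g i \<in> R1"
    proof
      fix i assume i: "i \<in> ?I1"
      have "1 - int n \<in> ?I" "int n - 1 \<in> ?I" using n1 by auto
      then show "g i \<in> R1" using i gA(1) gB(1) gC(1) by (auto simp: g_def)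
    qed
    have "X = Jn phi ?I1 g"
      unfolding Jn_split[OF bij n1] ABC(4) gA(2) gB(2) gC(2)
      using Jn_cong[OF aA] Jn_cong[OF aB] Jn_cong[OF aC] by simp
    then show "X \<in> generated phi R1 (n + 1)" using Gn1 iX gR by blast
  qed
qed

end
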